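(* Let $x\in\operatorname{Int}C$ and let $\beta:\mathbb{R}^{n_x}\to\mathbb{R}$ be a bounded measurable function with $\beta(y)=0$ for $y\notin C$. Then the limit $A^\pi\beta(x)=\lim_{t\searrow0}\frac{T_t^\pi\beta(x)-\beta(x)}{t}$ exists if and only if the limit $\mathcal{A}^\pi\beta(x)=\lim_{\tau\searrow0}\frac{\mathbb{E}^\pi[\beta(X_\tau)\mid X_0=x]-\beta(x)}{\tau}$ exists, and in that case $A^\pi\beta(x)=\mathcal{A}^\pi\beta(x)$.
   Context: Consider the controlled Itô SDE $dX_t=f(X_t,u_t)\,dt+\sigma(X_t,u_t)\,dW_t$ with state $X_t\in\mathbb{R}^{n_x}$, input $u_t\in U\subseteq\mathbb{R}^{n_u}$, locally Lipschitz $f:\mathbb{R}^{n_x}\times\mathbb{R}^{n_u}\to\mathbb{R}^{n_x}$ and $\sigma:\mathbb{R}^{n_x}\times\mathbb{R}^{n_u}\to\mathbb{R}^{n_x\times n_w}$, and $W_t$ a standard $n_w$-dimensional Brownian motion. The safe set $C\subsetneq\mathbb{R}^{n_x}$ is a compact regular set with nonempty connected interior and piecewise smooth boundary. Standing assumption: for every $x\in C$ and every input $u$, the matrix $\sigma(x,u)$ has full row rank. A time-invariant Lipschitz continuous feedback policy $\pi$ with values in $U$ is fixed and $u_t=\pi(X_t)$; $X_t$ denotes the (un-killed) closed-loop process (the paper implicitly takes $\pi$ defined wherever the process evolves, so that this process is well defined). The killed process uses a coffin state $K\notin\mathbb{R}^{n_x}$: $X_t^\dagger=X_t$ if $X_s\in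 C$ for all $s\in[0,t]$, and $X_t^\dagger=K$ otherwise. For $t\ge0$ and a measurable $\beta$ with $\beta=0$ outside $C$ (convention $\beta(K)=0$), $T_t^\pi\beta(x)=\mathbb{E}^\pi[\beta(X_t^\dagger)\mid X_0=x]$ for $x\in C$ and $T_t^\pi\beta(x)=0$ for $x\notin C$. $\mathbb{E}^\pi$ denotes expectation for the closed-loop system under $\pi$. *)

theory Defs
  imports "HOL-Analysis.Analysis" "HOL-Probability.Probability"
begin

definition loc_lipschitz :: "('a::metric_space \<Rightarrow> 'b::metric_space) \<Rightarrow> bool" where
  "loc_lipschitz F \<longleftrightarrow>
     (\<forall>z. \<exists>e>0. \<exists>L. \<forall>a\<in>ball z e. \<forall>b\<in>ball z e. dist (F a) (F b) \<le> L * dist a b)"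

definition test_fun ::
  "(real^'n \<Rightarrow> real) \<Rightarrow> (real^'n \<Rightarrow> real^'n) \<Rightarrow> (real^'n \<Rightarrow> real^'n^'n) \<Rightarrow> bool" where
  "test_fun \<phi> D H \<longleftrightarrow>
     (\<forall>y. (\<phi> has_derivative (\<lambda>h. D y \<bullet> h)) (at y)) \<and>
     (\<forall>y. (D has_derivative (\<lambda>h. H y *v h)) (at y)) \<and>
     continuous_on UNIV H \<and>
     compact (closure {y. \<phi> y \<noteq> 0})"

definition cl_generator ::
  "((real^'n) \<times> (real^'m) \<Rightarrow> real^'n) \<Rightarrow> ((real^'n) \<times> (real^'m) \<Rightarrow> real^'w^'n) \<Rightarrow>
   (real^'n \<Rightarrow> real^'m) \<Rightarrow> (real^'n \<Rightarrow> real^'n) \<Rightarrow> (real^'n \<Rightarrow> real^'n^'n) \<Rightarrow> real^'n \<Rightarrow> real" where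
  "cl_generator f \<sigma> \<pi> D H y =
     f (y, \<pi> y) \<bullet> D y
     + 1/2 * trace ((\<sigma> (y, \<pi> y) ** transpose (\<sigma> (y, \<pi> y))) ** H y)"

definition nat_filt :: "'a measure \<Rightarrow> (real \<Rightarrow> 'a \<Rightarrow> real^'n) \<Rightarrow> real \<Rightarrow> 'a set set" where
  "nat_filt M X s = sigma_sets (space M)
     (\<Union>r\<in>{0..s}. {X r -` B \<inter> space M | B. B \<in> sets borel})"

(* X is a (weak) solution of the closed-loop SDE dX = f(X,pi X)dt + sigma(X,pi X)dW
   started at x, in the sense of the Stroock--Varadhan martingale problem:
   continuous paths, X_0 = x, and for every C^2 compactly supported phi,
   phi(X_t) - phi(X_0) - int_0^t L phi(X_s) ds is a martingale w.r.t. the natural filtration. *)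
definition cl_solution ::
  "'a measure \<Rightarrow> (real \<Rightarrow> 'a \<Rightarrow> real^'n) \<Rightarrow> ((real^'n) \<times> (real^'m) \<Rightarrow> real^'n) \<Rightarrow>
   ((real^'n) \<times> (real^'m) \<Rightarrow> real^'w^'n) \<Rightarrow> (real^'n \<Rightarrow> real^'m) \<Rightarrow> real^'n \<Rightarrow> bool" where
  "cl_solution M X f \<sigma> \<pi> x \<longleftrightarrow>
     prob_space M \<and>
     (\<forall>t\<ge>0. X t \<in> borel_measurable M) \<and>
     (\<forall>\<omega>\<in>space M. X 0 \<omega> = x \<and> continuous_on {0..} (\<lambda>t. X t \<omega>)) \<and>
     (\<forall>\<phi> D H. test_fun \<phi> D H \<longrightarrow>
        (let Mt = (\<lambda>t \<omega>. \<phi> (X t \<omega>) - \<phi> (X 0 \<omega>)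
                      - integral {0..t} (\<lambda>s. cl_generator f \<sigma> \<pi> D H (X s \<omega>)))
         in \<forall>s t. 0 \<le> s \<longrightarrow> s \<le> t \<longrightarrow>
              integrable M (Mt t) \<and>
              (\<forall>A\<in>nat_filt M X s. (LINT \<omega>:A|M. Mt t \<omega>) = (LINT \<omega>:A|M. Mt s \<omega>))))"

(* Killed semigroup T_t beta(x) = E[beta(X_t^dagger) | X_0 = x], beta(K) = 0;
   the path must stay in C on [0,t] (including time 0, so the value is 0 if x \<notin> C). *)
definition killed_sg :: "'a measure \<Rightarrow> (real \<Rightarrow> 'a \<Rightarrow> real^'n) \<Rightarrow> (real^'n) set \<Rightarrow>
    (real^'n \<Rightarrow> real) \<Rightarrow> real \<Rightarrow> real" where
  "killed_sg M X C \<beta> t =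
     (LINT \<omega>|M. (if (\<forall>s\<in>{0..t}. X s \<omega> \<in> C) then \<beta> (X t \<omega>) else 0))"

end

theory Submission
  imports Defs
begin

definition kp :: "nat \<Rightarrow> real \<Rightarrow> real" where "kp n v = (max 0 v) ^ n"

lemma kp_deriv:
  assumes "n \<ge> 1"
  shows "(kp (Suc n) has_real_derivative (real (Suc n) * kp n v)) (at v)"
proof (cases "v = 0")
  case True
  have "((\<lambda>h. (kp (Suc n) h - kp (Suc n) 0) / h) \<longlongrightarrow> real (Suc n) * kp n 0) (at 0)"
  proof -
    have z: "real (Suc n) * kp n 0 = 0" using assms by (simp add: kp_def)
    have "((\<lambda>h. (kp (Suc n) h - kp (Suc n) 0) / h) \<longlongrightarrow> 0) (at 0)"
    proof (rule Lim_null_comparison[where g="\<lambda>h. \<bar>h\<bar> ^ n"])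
      show "\<forall>\<^sub>F h in at 0. norm ((kp (Suc n) h - kp (Suc n) 0) / h) \<le> \<bar>h\<bar> ^ n"
      proof (rule always_eventually, intro allI)
        fix h :: real
        have a: "\<bar>max 0 h\<bar> \<le> \<bar>h\<bar>" by auto
        have "norm ((kp (Suc n) h - kp (Suc n) 0) / h) = \<bar>max 0 h\<bar> ^ Suc n / \<bar>h\<bar>"
          by (simp add: kp_def abs_divide power_abs)
        also have "\<dots> \<le> \<bar>h\<bar> ^ n"
        proof (cases "h = 0")
          case False
          have "\<bar>max 0 h\<bar> ^ Suc n \<le> \<bar>h\<bar> ^ Suc n" by (rule power_mono[OF a]) simp
          then show ?thesis using False by (simp add: divide_le_eq mult.commute)
        qed simp
        finally show "norm ((kp (Suc n) h - kp (Suc n) 0) / h) \<le> \<bar>h\<bar> ^ n" .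
      qed
      show "((\<lambda>h. \<bar>h\<bar> ^ n) \<longlongrightarrow> 0) (at (0::real))"
      proof -
        have "((\<lambda>h::real. \<bar>h\<bar> ^ n) \<longlongrightarrow> \<bar>0\<bar> ^ n) (at 0)"
          by (intro tendsto_intros)
        moreover have "\<bar>0::real\<bar> ^ n = 0" using assms by simp
        ultimately show ?thesis by metis
      qed
    qed
    then show ?thesis using z by simp
  qed
  then show ?thesis using True by (simp add: DERIV_def)
next
  case False
  show ?thesis
  proof (cases "v > 0")
    case True
    have d: "((\<lambda>w. w ^ Suc n) has_real_derivative (real (Suc n) * v ^ n)) (at v)"
      using DERIV_pow[of "Suc n" v] by simp
    show ?thesis
    proof (rule has_field_derivative_transform_within_open[where S="{0<..}"])
      show "((\<lambda>w. w ^ Suc n) has_real_derivative real (Suc n) * kp n v) (at v)"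
        using d True by (simp add: kp_def)
      show "open {0::real<..}" by simp
      show "v \<in> {0<..}" using True by simp
      show "\<And>w. w \<in> {0<..} \<Longrightarrow> w ^ Suc n = kp (Suc n) w" by (simp add: kp_def)
    qed
  next
    case False
    then have vn: "v < 0" using \<open>v \<noteq> 0\<close> by simp
    show ?thesis
    proof (rule has_field_derivative_transform_within_open[where f="\<lambda>_. 0" and S="{..<0}"])
      show "((\<lambda>_. 0) has_real_derivative real (Suc n) * kp n v) (at v)"
      proof -
        have "kp n v = 0" using assms vn by (simp add: kp_def max_def power_0_left)
        then show ?thesis by simp
      qed
    qed (use vn in \<open>auto simp: kp_def\<close>)
  qed
qed

definition qf :: "real^'n \<Rightarrow> real^'n \<Rightarrow> real" where "qf x y = (y - x) \<bullet> (y - x)"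
definition pf :: "real^'n \<Rightarrow> real \<Rightarrow> real \<Rightarrow> real^'n \<Rightarrow> real" where
  "pf x m w y = w^2 - (qf x y - m)^2"
definition phif :: "real^'n \<Rightarrow> real \<Rightarrow> real \<Rightarrow> real^'n \<Rightarrow> real" where
  "phif x m w y = kp 3 (pf x m w y)"
definition betaf :: "real^'n \<Rightarrow> real \<Rightarrow> real \<Rightarrow> real^'n \<Rightarrow> real" where
  "betaf x m w y = 3 * kp 2 (pf x m w y) * (-4) * (qf x y - m)"
definition alphaf :: "real^'n \<Rightarrow> real \<Rightarrow> real \<Rightarrow> real^'n \<Rightarrow> real" where
  "alphaf x m w y = 96 * (qf x y - m)^2 * kp 1 (pf x m w y) - 24 * kp 2 (pf x m w y)"
definition Df :: "real^'n \<Rightarrow> real \<Rightarrow> real \<Rightarrow> real^'n \<Rightarrow> real^'n" where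
  "Df x m w y = betaf x m w y *\<^sub>R (y - x)"
definition Hf :: "real^'n \<Rightarrow> real \<Rightarrow> real \<Rightarrow> real^'n \<Rightarrow> real^'n^'n" where
  "Hf x m w y = (\<chi> i j. alphaf x m w y * (y - x) $ i * (y - x) $ j + (if i = j then betaf x m w y else 0))"

lemma qf_deriv: "(qf x has_derivative (\<lambda>h. 2 * ((y - x) \<bullet> h))) (at y)"
  unfolding qf_def
  by (auto intro!: derivative_eq_intros simp: inner_commute)

lemma pf_deriv: "(pf x m w has_derivative (\<lambda>h. -4 * (qf x y - m) * ((y - x) \<bullet> h))) (at y)"
  unfolding pf_def[abs_def]
  by (rule derivative_eq_intros qf_deriv refl)+ (simp add: algebra_simps fun_eq_iff)

lemma kp_hd: "n \<ge> 1 \<Longrightarrow> (kp (Suc n) has_derivative (\<lambda>z. (real (Suc n) * kp n v) * z)) (at v)"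
  using kp_deriv[of n v] by (simp add: has_field_derivative_def)

lemma phif_deriv: "(phif x m w has_derivative (\<lambda>h. Df x m w y \<bullet> h)) (at y)"
proof -
  have "((\<lambda>y. kp 3 (pf x m w y)) has_derivative (\<lambda>h. (real 3 * kp 2 (pf x m w y)) * (-4 * (qf x y - m) * ((y - x) \<bullet> h)))) (at y)"
    using has_derivative_compose[OF pf_deriv kp_hd[of 2, simplified numeral_3_eq_3[symmetric]]]
    by (simp add: numeral_2_eq_2 numeral_3_eq_3)
  then show ?thesis unfolding phif_def[abs_def] Df_def betaf_def
    by (simp add: algebra_simps)
qed

lemma matrix_form_mult:
  fixes a h :: "real^'n"
  shows "(\<chi> i j. al * a $ i * a $ j + (if i = j then be else 0)) *v h = (al * (a \<bullet> h)) *\<^sub>R a + be *\<^sub>R h"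
proof -
  have "(\<Sum>j\<in>UNIV. (al * a$i * a$j + (if i = j then be else 0)) * h$j) = al * (a \<bullet> h) * a $ i + be * h $ i" for i
  proof -
    have "(\<Sum>j\<in>UNIV. (al * a$i * a$j + (if i = j then be else 0)) * h$j) =
       (\<Sum>j\<in>UNIV. (al * a$i) * (a$j * h$j)) + (\<Sum>j\<in>UNIV. (if i = j then be * h$j else 0))"
      by (subst sum.distrib[symmetric]) (rule sum.cong, auto simp: algebra_simps)
    also have "\<dots> = al * (a \<bullet> h) * a $ i + be * h $ i"
      by (simp add: sum_distrib_left[symmetric] inner_vec_def)
    finally show ?thesis .
  qed
  then show ?thesis by (simp add: vec_eq_iff matrix_vector_mult_def)
qed

lemma Hf_mult: "Hf x m w y *v h = (alphaf x m w y * ((y - x) \<bullet> h)) *\<^sub>R (y - x) + betaf x m w y *\<^sub>R h"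
  unfolding Hf_def by (rule matrix_form_mult)

lemma kp2_pf_deriv: "((\<lambda>y. kp 2 (pf x m w y)) has_derivative (\<lambda>h. 2 * kp 1 (pf x m w y) * (-4 * (qf x y - m) * ((y - x) \<bullet> h)))) (at y)"
  using has_derivative_compose[OF pf_deriv kp_hd[of 1]] by (simp add: numeral_2_eq_2)

lemma betaf_deriv: "(betaf x m w has_derivative (\<lambda>h. alphaf x m w y * ((y - x) \<bullet> h))) (at y)"
proof -
  have "((\<lambda>y. 3 * kp 2 (pf x m w y) * (-4) * (qf x y - m)) has_derivative
     (\<lambda>h. 3 * (2 * kp 1 (pf x m w y) * (-4 * (qf x y - m) * ((y - x) \<bullet> h))) * (-4) * (qf x y - m)
          + 3 * kp 2 (pf x m w y) * (-4) * (2 * ((y - x) \<bullet> h)))) (at y)"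
    by (rule derivative_eq_intros kp2_pf_deriv qf_deriv refl)+ (simp add: algebra_simps fun_eq_iff)
  then show ?thesis unfolding betaf_def[abs_def] alphaf_def
    by (rule has_derivative_eq_rhs) (simp add: fun_eq_iff algebra_simps power2_eq_square)
qed

lemma Df_deriv: "(Df x m w has_derivative (\<lambda>h. Hf x m w y *v h)) (at y)"
proof -
  have "((\<lambda>y. betaf x m w y *\<^sub>R (y - x)) has_derivative
      (\<lambda>h. betaf x m w y *\<^sub>R (h - 0) + (alphaf x m w y * ((y - x) \<bullet> h)) *\<^sub>R (y - x))) (at y)"
    by (intro derivative_intros betaf_deriv)
  then show ?thesis unfolding Df_def[abs_def] Hf_mult
    by (rule has_derivative_eq_rhs) (simp add: fun_eq_iff algebra_simps)
qed

lemma kp_nonpos: "v \<le> 0 \<Longrightarrow> n \<ge> 1 \<Longrightarrow> kp n v = 0"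
  by (simp add: kp_def max_def power_0_left)

lemma kp_nonneg: "kp n v \<ge> 0"
  by (simp add: kp_def)

lemma continuous_kp[continuous_intros]: "continuous_on S f \<Longrightarrow> continuous_on S (\<lambda>y. kp n (f y))"
  unfolding kp_def by (intro continuous_intros)

lemma continuous_qf[continuous_intros]: "continuous_on S (qf x)"
  unfolding qf_def[abs_def] by (intro continuous_intros)

lemma continuous_pf[continuous_intros]: "continuous_on S (pf x m w)"
  unfolding pf_def[abs_def] by (intro continuous_intros)

lemma continuous_phif[continuous_intros]: "continuous_on S (phif x m w)"
  unfolding phif_def[abs_def] by (intro continuous_intros)

lemma continuous_Hf: "continuous_on S (Hf x m w)"
  unfolding Hf_def[abs_def] alphaf_def betaf_def
  apply (intro continuous_on_vec_lambda)
  subgoal for i j by (cases "i = j") (auto intro!: continuous_intros)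
  done

lemma qf_dist: "qf x y = (dist y x)^2"
  by (simp add: qf_def dist_norm power2_norm_eq_inner)

lemma pf_pos_dist:
  assumes r: "r > 0" and p: "pf x (r^2) (r^2/2) y > 0"
  shows "r/2 < dist y x \<and> dist y x < 2*r"
proof -
  have "(qf x y - r^2)^2 < (r^2/2)^2" using p by (simp add: pf_def)
  then have "\<bar>qf x y - r^2\<bar> < r^2/2"
    by (metis abs_power2 power2_less_imp_less zero_le_divide_iff zero_le_numeral zero_le_power2 power2_abs)
  then have "\<bar>(dist y x)^2 - r^2\<bar> < r^2/2" by (simp add: qf_dist)
  then have a: "r^2/2 < (dist y x)^2" "(dist y x)^2 < 3/2 * r^2" by arith+
  have "(r/2)^2 < (dist y x)^2" using a r by (simp add: power_divide)
  then have "r/2 < dist y x" by (rule power2_less_imp_less) simp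
  moreover have "(dist y x)^2 < (2*r)^2" using a r by (simp add: power_mult_distrib)
  then have "dist y x < 2*r" by (rule power2_less_imp_less) (use r in simp)
  ultimately show ?thesis by simp
qed

lemma phif_zero_if: "pf x m w y \<le> 0 \<Longrightarrow> phif x m w y = 0"
  by (simp add: phif_def kp_nonpos)

lemma Df_zero_if: "pf x m w y \<le> 0 \<Longrightarrow> Df x m w y = 0"
  by (simp add: Df_def betaf_def kp_nonpos)

lemma Hf_zero_if: "pf x m w y \<le> 0 \<Longrightarrow> Hf x m w y = 0"
  by (simp add: Hf_def betaf_def alphaf_def kp_nonpos vec_eq_iff)

lemma gen_zero_if:
  assumes "pf x m w y \<le> 0"
  shows "cl_generator f \<sigma> \<pi> (Df x m w) (Hf x m w) y = 0"
  using assms by (simp add: cl_generator_def Df_zero_if Hf_zero_if trace_def matrix_matrix_mult_def)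

lemma test_fun_phif:
  assumes r: "r > 0"
  shows "test_fun (phif x (r^2) (r^2/2)) (Df x (r^2) (r^2/2)) (Hf x (r^2) (r^2/2))"
  unfolding test_fun_def
proof (intro conjI allI phif_deriv Df_deriv continuous_Hf)
  have "{y. phif x (r^2) (r^2/2) y \<noteq> 0} \<subseteq> cball x (2*r)"
  proof
    fix y assume "y \<in> {y. phif x (r^2) (r^2/2) y \<noteq> 0}"
    then have "pf x (r^2) (r^2/2) y > 0" using phif_zero_if by force
    then show "y \<in> cball x (2*r)" using pf_pos_dist[OF r, of x y] by (auto simp: dist_commute)
  qed
  then have "bounded {y. phif x (r^2) (r^2/2) y \<noteq> 0}" by (rule bounded_subset[OF bounded_cball])
  then show "compact (closure {y. phif x (r^2) (r^2/2) y \<noteq> 0})" by (simp add: compact_closure)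
qed

lemma phif_nonneg: "phif x m w y \<ge> 0"
  by (simp add: phif_def kp_nonneg)

lemma phif_center: "r > 0 \<Longrightarrow> phif x (r^2) (r^2/2) x = 0"
  by (rule phif_zero_if) (simp add: pf_def qf_def power_divide power2_eq_square)

lemma phif_sphere: "dist y x = r \<Longrightarrow> phif x (r^2) (r^2/2) y = (r^2/2)^6"
  by (simp add: phif_def pf_def qf_dist kp_def power_mult[symmetric])

lemma loc_lipschitz_cont:
  assumes "loc_lipschitz F"
  shows "continuous_on UNIV F"
  unfolding continuous_on_iff
proof (intro ballI allI impI)
  fix z :: 'a and \<epsilon> :: real assume "\<epsilon> > 0"
  obtain e L where e: "e > 0" and L: "\<forall>a\<in>ball z e. \<forall>b\<in>ball z e. dist (F a) (F b) \<le> L * dist a b"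
    using assms unfolding loc_lipschitz_def by blast
  define \<delta> where "\<delta> = min e (\<epsilon> / (\<bar>L\<bar> + 1))"
  have \<delta>: "\<delta> > 0" using e \<open>\<epsilon> > 0\<close> by (simp add: \<delta>_def)
  show "\<exists>\<delta>>0. \<forall>x'\<in>UNIV. dist x' z < \<delta> \<longrightarrow> dist (F x') (F z) < \<epsilon>"
  proof (intro exI[of _ \<delta>] conjI ballI impI \<delta>)
    fix a assume a: "dist a z < \<delta>"
    then have "a \<in> ball z e" by (simp add: \<delta>_def dist_commute)
    then have "dist (F a) (F z) \<le> L * dist a z" using L e by simp
    also have "\<dots> \<le> (\<bar>L\<bar> + 1) * dist a z" by (intro mult_right_mono) auto
    also have "\<dots> < (\<bar>L\<bar> + 1) * (\<epsilon> / (\<bar>L\<bar> + 1))"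
      using a by (intro mult_strict_left_mono) (auto simp: \<delta>_def)
    also have "\<dots> = \<epsilon>" by simp
    finally show "dist (F a) (F z) < \<epsilon>" .
  qed
qed

lemma cl_generator_cont:
  fixes f :: "(real^'n) \<times> (real^'m) \<Rightarrow> real^'n"
    and \<sigma> :: "(real^'n) \<times> (real^'m) \<Rightarrow> real^'w^'n"
    and \<pi> :: "real^'n \<Rightarrow> real^'m"
  assumes f: "continuous_on UNIV f" and s: "continuous_on UNIV \<sigma>" and p: "continuous_on UNIV \<pi>"
    and D: "continuous_on UNIV D" and H: "continuous_on UNIV H"
  shows "continuous_on UNIV (cl_generator f \<sigma> \<pi> D H)"
proof -
  have fp: "continuous_on UNIV (\<lambda>y. f (y, \<pi> y))"
    by (rule continuous_on_compose2[OF f]) (auto intro!: continuous_intros p)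
  have sp: "continuous_on UNIV (\<lambda>y. \<sigma> (y, \<pi> y))"
    by (rule continuous_on_compose2[OF s]) (auto intro!: continuous_intros p)
  show ?thesis
    unfolding cl_generator_def[abs_def] trace_def matrix_matrix_mult_def transpose_def
    by (simp, intro continuous_intros fp sp D H) simp
qed

lemma bound_outside:
  fixes G :: "'a::metric_space \<Rightarrow> real"
  assumes "continuous_on UNIV G" "compact S" "\<And>y. y \<notin> S \<Longrightarrow> G y = 0"
  shows "\<exists>K\<ge>0. \<forall>y. \<bar>G y\<bar> \<le> K"
proof -
  have "compact (G ` S)" by (rule compact_continuous_image) (use assms in \<open>auto intro: continuous_on_subset\<close>)
  then obtain B where B: "\<forall>z\<in>G ` S. norm z \<le> B" using compact_imp_bounded bounded_iff by metis
  show ?thesis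
  proof (intro exI[of _ "max B 0"] conjI allI)
    fix y show "\<bar>G y\<bar> \<le> max B 0" using B assms(3)[of y] by (cases "y \<in> S") auto
  qed simp
qed

locale paths =
  fixes M :: "'a measure" and X :: "real \<Rightarrow> 'a \<Rightarrow> real^'n" and x :: "real^'n"
  assumes P: "prob_space M"
    and Xm: "\<forall>t\<ge>0. X t \<in> borel_measurable M"
    and Xc: "\<forall>\<omega>\<in>space M. X 0 \<omega> = x \<and> continuous_on {0..} (\<lambda>t. X t \<omega>)"
begin

lemma Xm': "t \<ge> 0 \<Longrightarrow> X t \<in> borel_measurable M" using Xm by auto

lemma Xc': "\<omega> \<in> space M \<Longrightarrow> continuous_on {0..} (\<lambda>t. X t \<omega>)" using Xc by auto
lemma X0: "\<omega> \<in> space M \<Longrightarrow> X 0 \<omega> = x" using Xc by auto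

lemma Xc_t: "\<omega> \<in> space M \<Longrightarrow> continuous_on {0..t} (\<lambda>t. X t \<omega>)"
  by (rule continuous_on_subset[OF Xc']) auto

lemma pre_sets: "t \<ge> 0 \<Longrightarrow> B \<in> sets borel \<Longrightarrow> X t -` B \<inter> space M \<in> sets M"
  using Xm' measurable_sets by blast

lemma exists_open_eq:
  assumes Ob: "open Ob" and t: "t \<ge> 0"
  shows "{\<omega>\<in>space M. \<exists>s\<in>{0..t}. X s \<omega> \<in> Ob} = (\<Union>s\<in>({0..t} \<inter> \<rat>) \<union> {t}. X s -` Ob \<inter> space M)"
proof (intro equalityI subsetI)
  fix \<omega> assume "\<omega> \<in> {\<omega>\<in>space M. \<exists>s\<in>{0..t}. X s \<omega> \<in> Ob}"
  then obtain s where \<omega>: "\<omega> \<in> space M" and s: "s \<in> {0..t}" "X s \<omega> \<in> Ob" by auto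
  obtain e where e: "e > 0" "ball (X s \<omega>) e \<subseteq> Ob" using Ob s open_contains_ball by blast
  obtain d where d: "d > 0" "\<forall>u\<in>{0..t}. dist u s < d \<longrightarrow> dist (X u \<omega>) (X s \<omega>) < e"
    using Xc_t[OF \<omega>, of t] s e unfolding continuous_on_iff by blast
  show "\<omega> \<in> (\<Union>s\<in>({0..t} \<inter> \<rat>) \<union> {t}. X s -` Ob \<inter> space M)"
  proof (cases "s = t")
    case True then show ?thesis using s \<omega> by auto
  next
    case False
    then have "s < min t (s + d)" using s d by auto
    then obtain q where q: "q \<in> \<rat>" "s < q" "q < min t (s + d)" using Rats_dense_in_real by blast
    then have "q \<in> {0..t}" "dist q s < d" using s by (auto simp: dist_real_def)
    then have "X q \<omega> \<in> Ob" using d e by (auto simp: dist_commute)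
    then show ?thesis using q \<omega> \<open>q \<in> {0..t}\<close> by auto
  qed
qed (use t in auto)

lemma exists_open_sets:
  assumes Ob: "open Ob" and t: "t \<ge> 0"
  shows "{\<omega>\<in>space M. \<exists>s\<in>{0..t}. X s \<omega> \<in> Ob} \<in> sets M"
  unfolding exists_open_eq[OF assms]
  by (intro sets.countable_UN') (use Ob t countable_rat in \<open>auto intro!: pre_sets\<close>)

lemma nat_filt_sub: "s \<ge> 0 \<Longrightarrow> nat_filt M X s \<subseteq> sets M"
  unfolding nat_filt_def by (intro sets.sigma_sets_subset) (auto intro: pre_sets)

lemma nat_filt_gen: "r \<in> {0..s} \<Longrightarrow> B \<in> sets borel \<Longrightarrow> X r -` B \<inter> space M \<in> nat_filt M X s"
  unfolding nat_filt_def by (rule sigma_sets.Basic) blast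

lemma nat_filt_sa: "sigma_algebra (space M) (nat_filt M X s)"
  unfolding nat_filt_def by (rule sigma_algebra_sigma_sets) auto

lemma nat_filt_top: "space M \<in> nat_filt M X s"
  unfolding nat_filt_def by (rule sigma_sets_top)

lemma nat_filt_Int: "A \<in> nat_filt M X s \<Longrightarrow> B \<in> nat_filt M X s \<Longrightarrow> A \<inter> B \<in> nat_filt M X s"
proof -
  interpret S: sigma_algebra "space M" "nat_filt M X s" by (rule nat_filt_sa)
  show "A \<in> nat_filt M X s \<Longrightarrow> B \<in> nat_filt M X s \<Longrightarrow> A \<inter> B \<in> nat_filt M X s" by (rule S.Int)
qed

end

lemma int_bound0:
  fixes g :: "real \<Rightarrow> real"
  assumes "0 \<le> s" "0 \<le> K" "\<And>u. u \<in> {0..s} \<Longrightarrow> \<bar>g u\<bar> \<le> K"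
  shows "\<bar>integral {0..s} g\<bar> \<le> K * s"
proof (cases "g integrable_on {0..s}")
  case True
  have "norm (integral {0..s} g) \<le> K * measure lborel (cbox 0 s)"
    by (rule has_integral_bound[OF assms(2)]) (use True assms(3) in \<open>auto simp: cbox_interval\<close>)
  then show ?thesis using assms(1) by simp
next
  case False then show ?thesis using assms by (simp add: not_integrable_integral)
qed

lemma integral_00: "integral {0..0::real} g = 0"
  by (metis cbox_interval integral_refl)

locale est = paths M X x for M :: "'a measure" and X :: "real \<Rightarrow> 'a \<Rightarrow> real^'n" and x +
  fixes \<phi> :: "real^'n \<Rightarrow> real" and G :: "real^'n \<Rightarrow> real" and K \<rho> c Bp :: real
    and Mt :: "real \<Rightarrow> 'a \<Rightarrow> real"
  assumes phic: "continuous_on UNIV \<phi>" and phi0: "\<And>y. 0 \<le> \<phi> y" and phix: "\<phi> x = 0"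
    and phib: "\<And>y. \<phi> y \<le> Bp"
    and GK: "\<And>y. \<bar>G y\<bar> \<le> K" and Gz: "\<And>y. dist y x \<le> \<rho> \<Longrightarrow> G y = 0"
    and mart: "\<forall>s t. 0 \<le> s \<longrightarrow> s \<le> t \<longrightarrow> integrable M (Mt t) \<and>
       (\<forall>A\<in>nat_filt M X s. (LINT \<omega>:A|M. Mt t \<omega>) = (LINT \<omega>:A|M. Mt s \<omega>))"
    and Mt_eq: "\<And>t \<omega>. Mt t \<omega> = \<phi> (X t \<omega>) - \<phi> (X 0 \<omega>) - integral {0..t} (\<lambda>s. G (X s \<omega>))"
    and c: "c > 0"
begin

definition Ft :: "real \<Rightarrow> 'a set" where
  "Ft t = {\<omega>\<in>space M. \<exists>s\<in>{0..t}. dist (X s \<omega>) x > \<rho>}"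

abbreviation I :: "real \<Rightarrow> 'a \<Rightarrow> real" where
  "I t \<omega> \<equiv> integral {0..t} (\<lambda>s. G (X s \<omega>))"

lemma K_nonneg: "0 \<le> K" using GK[of x] by linarith

lemma Ft_sets: "t \<ge> 0 \<Longrightarrow> Ft t \<in> sets M"
proof -
  assume t: "t \<ge> 0"
  have o: "open {y. \<rho> < dist y x}" by (intro open_Collect_less continuous_intros)
  show ?thesis using exists_open_sets[OF o t] by (simp add: Ft_def)
qed

lemma I_bound:
  assumes \<omega>: "\<omega> \<in> space M" and s: "s \<in> {0..t}"
  shows "\<bar>I s \<omega>\<bar> \<le> K * t * indicator (Ft t) \<omega>"
proof (cases "\<omega> \<in> Ft t")
  case True
  have "\<bar>I s \<omega>\<bar> \<le> K * s" by (rule int_bound0) (use s K_nonneg GK in auto)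
  also have "\<dots> \<le> K * t" using s K_nonneg by (auto intro: mult_left_mono)
  finally show ?thesis using True by simp
next
  case False
  then have "\<forall>u\<in>{0..s}. G (X u \<omega>) = 0" using \<omega> s Gz by (force simp: Ft_def not_less)
  then have "I s \<omega> = integral {0..s} (\<lambda>_. 0::real)" by (intro integral_cong) auto
  then show ?thesis using False by simp
qed

lemma Mt_int: "t \<ge> 0 \<Longrightarrow> integrable M (Mt t)" using mart[rule_format, of 0 t] by simp

lemma mart':
  assumes "0 \<le> s" "s \<le> t" "A \<in> nat_filt M X s"
  shows "integral\<^sup>L M (\<lambda>\<omega>. indicator A \<omega> * Mt t \<omega>) = integral\<^sup>L M (\<lambda>\<omega>. indicator A \<omega> * Mt s \<omega>)"
proof -
  have "(LINT \<omega>:A|M. Mt t \<omega>) = (LINT \<omega>:A|M. Mt s \<omega>)"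
    using mart[rule_format, OF assms(1,2)] assms(3) by blast
  then show ?thesis by (simp add: set_lebesgue_integral_def)
qed

lemma Mt_simp: "\<omega> \<in> space M \<Longrightarrow> Mt t \<omega> = \<phi> (X t \<omega>) - I t \<omega>"
  using Mt_eq X0 phix by simp

lemma E_Mt: assumes "t \<ge> 0" shows "integral\<^sup>L M (Mt t) = 0"
proof -
  have "integral\<^sup>L M (Mt t) = integral\<^sup>L M (\<lambda>\<omega>. indicator (space M) \<omega> * Mt t \<omega>)"
    by (intro Bochner_Integration.integral_cong) auto
  also have "\<dots> = integral\<^sup>L M (\<lambda>\<omega>. indicator (space M) \<omega> * Mt 0 \<omega>)"
    by (rule mart') (use assms nat_filt_top in auto)
  also have "\<dots> = 0" by (subst Bochner_Integration.integral_cong[where g="\<lambda>_. 0"]) (auto simp: Mt_simp integral_00 X0 phix)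
  finally show ?thesis .
qed

lemma phi_meas: "t \<ge> 0 \<Longrightarrow> (\<lambda>\<omega>. \<phi> (X t \<omega>)) \<in> borel_measurable M"
  by (rule measurable_compose[OF Xm' borel_measurable_continuous_onI[OF phic]])

lemma phi_int: "t \<ge> 0 \<Longrightarrow> integrable M (\<lambda>\<omega>. \<phi> (X t \<omega>))"
proof -
  assume t: "t \<ge> 0"
  interpret prob_space M by (rule P)
  show ?thesis
    by (rule integrable_const_bound[where B=Bp]) (use phi0 phib phi_meas[OF t] in auto)
qed

end

context est
begin

lemma grid_bound:
  fixes \<tau> :: "nat \<Rightarrow> real" and N :: nat
  assumes t: "t > 0" and \<tau>: "\<And>k. k \<le> N \<Longrightarrow> 0 \<le> \<tau> k \<and> \<tau> k \<le> t"
    and mono: "\<And>j k. j \<le> k \<Longrightarrow> k \<le> N \<Longrightarrow> \<tau> j \<le> \<tau> k"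
  shows "measure M {\<omega>\<in>space M. \<exists>k\<le>N. c \<le> \<phi> (X (\<tau> k) \<omega>)} \<le> 3 * K * t * measure M (Ft t) / c"
proof -
  interpret prob_space M by (rule P)
  define A where "A k = {\<omega>\<in>space M. (\<forall>j<k. \<phi> (X (\<tau> j) \<omega>) < c) \<and> c \<le> \<phi> (X (\<tau> k) \<omega>)}" for k
  define Gs where "Gs = {\<omega>\<in>space M. \<exists>k\<le>N. c \<le> \<phi> (X (\<tau> k) \<omega>)}"
  define Z where "Z \<omega> = K * t * indicator (Ft t) \<omega>" for \<omega>
  have bo: "{y. \<phi> y < c} \<in> sets borel"
    by (intro borel_open open_Collect_less phic continuous_intros)
  have bc: "{y. c \<le> \<phi> y} \<in> sets borel"
    by (intro borel_closed closed_Collect_le phic continuous_intros)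
  have Pk: "j \<le> k \<Longrightarrow> {\<omega>\<in>space M. \<forall>i<j. \<phi> (X (\<tau> i) \<omega>) < c} \<in> nat_filt M X (\<tau> k)" if "k \<le> N" for j k
  proof (induction j)
    case 0 then show ?case using nat_filt_top by simp
  next
    case (Suc j)
    have eq: "{\<omega>\<in>space M. \<forall>i<Suc j. \<phi> (X (\<tau> i) \<omega>) < c} =
      {\<omega>\<in>space M. \<forall>i<j. \<phi> (X (\<tau> i) \<omega>) < c} \<inter> (X (\<tau> j) -` {y. \<phi> y < c} \<inter> space M)"
      by (auto simp: less_Suc_eq)
    have "\<tau> j \<in> {0..\<tau> k}" using \<tau>[of j] mono[of j k] Suc.prems that by auto
    then show ?case unfolding eq
      by (intro nat_filt_Int Suc.IH nat_filt_gen bo) (use Suc.prems in auto)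
  qed
  have A_filt: "A k \<in> nat_filt M X (\<tau> k)" if "k \<le> N" for k
  proof -
    have eq: "A k = {\<omega>\<in>space M. \<forall>i<k. \<phi> (X (\<tau> i) \<omega>) < c} \<inter> (X (\<tau> k) -` {y. c \<le> \<phi> y} \<inter> space M)"
      by (auto simp: A_def)
    show ?thesis unfolding eq
      by (intro nat_filt_Int Pk nat_filt_gen bc) (use that \<tau>[OF that] in auto)
  qed
  have A_sets: "A k \<in> sets M" if "k \<le> N" for k
    using nat_filt_sub[of "\<tau> k"] A_filt[OF that] \<tau>[OF that] by auto
  have Gs_sets: "Gs \<in> sets M"
  proof -
    have "Gs = (\<Union>k\<in>{..N}. X (\<tau> k) -` {y. c \<le> \<phi> y} \<inter> space M)" by (auto simp: Gs_def)
    moreover have "(\<Union>k\<in>{..N}. X (\<tau> k) -` {y. c \<le> \<phi> y} \<inter> space M) \<in> sets M"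
      apply (rule sets.countable_UN'[OF countable_finite[OF finite_atMost]])
      apply (rule image_subsetI)
      apply (rule pre_sets[OF _ bc])
      using \<tau> apply auto
      done
    ultimately show ?thesis by simp
  qed
  have sum_eq: "(\<Sum>k\<le>N. indicator (A k) \<omega> * F k) = (if \<omega> \<in> Gs then F (LEAST k. c \<le> \<phi> (X (\<tau> k) \<omega>)) else 0)"
    if \<omega>: "\<omega> \<in> space M" for \<omega> and F :: "nat \<Rightarrow> real"
  proof (cases "\<omega> \<in> Gs")
    case True
    define k0 where "k0 = (LEAST k. c \<le> \<phi> (X (\<tau> k) \<omega>))"
    obtain k1 where k1: "k1 \<le> N" "c \<le> \<phi> (X (\<tau> k1) \<omega>)" using True by (auto simp: Gs_def)
    have k0N: "k0 \<le> N" using Least_le[of "\<lambda>k. c \<le> \<phi> (X (\<tau> k) \<omega>)", OF k1(2)] k1(1) by (simp add: k0_def)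
    have ind: "indicator (A k) \<omega> = (if k = k0 then 1 else (0::real))" for k
    proof -
      have "\<omega> \<in> A k \<longleftrightarrow> k = k0"
      proof
        assume "\<omega> \<in> A k"
        then have h: "\<forall>j<k. \<phi> (X (\<tau> j) \<omega>) < c" "c \<le> \<phi> (X (\<tau> k) \<omega>)" by (auto simp: A_def)
        show "k = k0" unfolding k0_def
        proof (rule Least_equality[symmetric])
          fix y assume y: "c \<le> \<phi> (X (\<tau> y) \<omega>)"
          show "k \<le> y"
          proof (rule ccontr)
            assume "\<not> k \<le> y"
            then have "y < k" by simp
            then show False using h(1) y by force
          qed
        qed (rule h(2))
      next
        assume "k = k0"
        then show "\<omega> \<in> A k" unfolding k0_def A_def using \<omega> k1(2)
          by (auto intro: LeastI dest: not_less_Least simp: not_le)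
      qed
      then show ?thesis by (simp add: indicator_def)
    qed
    have "(\<Sum>k\<le>N. indicator (A k) \<omega> * F k) = (\<Sum>k\<le>N. if k = k0 then F k else 0)"
      by (intro sum.cong) (auto simp: ind)
    also have "\<dots> = F k0" using k0N by simp
    finally show ?thesis using True by (simp add: k0_def)
  next
    case False
    then have "\<omega> \<notin> A k" if "k \<le> N" for k using that by (auto simp: A_def Gs_def)
    then show ?thesis using False by simp
  qed
  have Zn: "0 \<le> Z \<omega>" for \<omega> using K_nonneg t by (simp add: Z_def)
  have iii: "c * indicator Gs \<omega> - Z \<omega> \<le> (\<Sum>k\<le>N. indicator (A k) \<omega> * Mt (\<tau> k) \<omega>)"
    if \<omega>: "\<omega> \<in> space M" for \<omega>
  proof (cases "\<omega> \<in> Gs")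
    case True
    define k0 where "k0 = (LEAST k. c \<le> \<phi> (X (\<tau> k) \<omega>))"
    obtain k1 where k1: "k1 \<le> N" "c \<le> \<phi> (X (\<tau> k1) \<omega>)" using True by (auto simp: Gs_def)
    have k0N: "k0 \<le> N" using Least_le[of "\<lambda>k. c \<le> \<phi> (X (\<tau> k) \<omega>)", OF k1(2)] k1(1) by (simp add: k0_def)
    have c0: "c \<le> \<phi> (X (\<tau> k0) \<omega>)" unfolding k0_def by (rule LeastI[of "\<lambda>k. c \<le> \<phi> (X (\<tau> k) \<omega>)", OF k1(2)])
    have "\<bar>I (\<tau> k0) \<omega>\<bar> \<le> Z \<omega>" unfolding Z_def by (rule I_bound[OF \<omega>]) (use \<tau>[OF k0N] in auto)
    then show ?thesis using True c0 by (simp add: sum_eq[OF \<omega>] k0_def[symmetric] Mt_simp[OF \<omega>])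
  next
    case False then show ?thesis using Zn[of \<omega>] by (simp add: sum_eq[OF \<omega>])
  qed
  have iv: "(\<Sum>k\<le>N. indicator (A k) \<omega> * Mt t \<omega>) \<le> \<phi> (X t \<omega>) + Z \<omega>"
    if \<omega>: "\<omega> \<in> space M" for \<omega>
  proof -
    have "\<bar>I t \<omega>\<bar> \<le> Z \<omega>" unfolding Z_def by (rule I_bound[OF \<omega>]) (use t in auto)
    then show ?thesis using Zn[of \<omega>] phi0[of "X t \<omega>"]
      by (simp add: sum_eq[OF \<omega>] Mt_simp[OF \<omega>]) linarith
  qed
  have v: "\<phi> (X t \<omega>) - Mt t \<omega> \<le> Z \<omega>" if \<omega>: "\<omega> \<in> space M" for \<omega>
  proof -
    have "\<bar>I t \<omega>\<bar> \<le> Z \<omega>" unfolding Z_def by (rule I_bound[OF \<omega>]) (use t in auto)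
    then show ?thesis by (simp add: Mt_simp[OF \<omega>])
  qed
  have indint: "integrable M (indicator B :: 'a \<Rightarrow> real)" if "B \<in> sets M" for B
    by (rule integrable_real_indicator) (use that in \<open>auto simp: less_top[symmetric]\<close>)
  have Zint: "integrable M Z" unfolding Z_def using indint[OF Ft_sets[of t]] t by auto
  have EZ: "integral\<^sup>L M Z = K * t * measure M (Ft t)" unfolding Z_def using Ft_sets[of t] t by simp
  have intA: "integrable M (\<lambda>\<omega>. indicator (A k) \<omega> * Mt s \<omega>)" if "k \<le> N" "s \<ge> 0" for k s
    using integrable_real_mult_indicator[OF A_sets[OF that(1)] Mt_int[OF that(2)]] by (simp add: mult.commute)
  have intA': "integrable M (\<lambda>\<omega>. indicator (A k) \<omega> * Mt s \<omega>)" if "k \<in> {..N}" "s \<in> {t} \<union> \<tau> ` {..N}" for k s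
    using intA[of k s] that \<tau>[of k] \<tau> t by auto
  have i1: "integrable M (\<lambda>\<omega>. c * indicator Gs \<omega> - Z \<omega>)"
    using indint[OF Gs_sets] Zint by auto
  have i2: "integrable M (\<lambda>\<omega>. \<Sum>k\<le>N. indicator (A k) \<omega> * Mt (\<tau> k) \<omega>)"
    by (rule Bochner_Integration.integrable_sum) (rule intA', auto)
  have i3: "integrable M (\<lambda>\<omega>. \<Sum>k\<le>N. indicator (A k) \<omega> * Mt t \<omega>)"
    by (rule Bochner_Integration.integrable_sum) (rule intA', auto)
  have pint: "integrable M (\<lambda>\<omega>. \<phi> (X t \<omega>))" using phi_int[of t] t by simp
  have mint: "integrable M (Mt t)" using Mt_int[of t] t by simp
  have i4: "integrable M (\<lambda>\<omega>. \<phi> (X t \<omega>) + Z \<omega>)" using pint Zint by (rule Bochner_Integration.integrable_add)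
  have i5: "integrable M (\<lambda>\<omega>. \<phi> (X t \<omega>) - Mt t \<omega>)" using pint mint by (rule Bochner_Integration.integrable_diff)
  have GsI: "Gs \<inter> space M = Gs" unfolding Gs_def by blast
  have "integral\<^sup>L M (\<lambda>\<omega>. c * indicator Gs \<omega> - Z \<omega>) = integral\<^sup>L M (\<lambda>\<omega>. c * indicator Gs \<omega>) - integral\<^sup>L M Z"
    by (rule Bochner_Integration.integral_diff) (use indint[OF Gs_sets] Zint in auto)
  also have "\<dots> = c * measure M Gs - integral\<^sup>L M Z" using GsI by simp
  finally have "c * measure M Gs - integral\<^sup>L M Z = integral\<^sup>L M (\<lambda>\<omega>. c * indicator Gs \<omega> - Z \<omega>)" by simp
  also have "\<dots> \<le> integral\<^sup>L M (\<lambda>\<omega>. \<Sum>k\<le>N. indicator (A k) \<omega> * Mt (\<tau> k) \<omega>)"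
    by (rule integral_mono[OF i1 i2 iii])
  also have "\<dots> = (\<Sum>k\<le>N. integral\<^sup>L M (\<lambda>\<omega>. indicator (A k) \<omega> * Mt (\<tau> k) \<omega>))"
    by (rule Bochner_Integration.integral_sum) (rule intA', auto)
  also have "\<dots> = (\<Sum>k\<le>N. integral\<^sup>L M (\<lambda>\<omega>. indicator (A k) \<omega> * Mt t \<omega>))"
  proof (rule sum.cong[OF refl])
    fix k assume k: "k \<in> {..N}"
    show "integral\<^sup>L M (\<lambda>\<omega>. indicator (A k) \<omega> * Mt (\<tau> k) \<omega>) = integral\<^sup>L M (\<lambda>\<omega>. indicator (A k) \<omega> * Mt t \<omega>)"
      by (rule mart'[symmetric]) (use k \<tau>[of k] A_filt[of k] in auto)
  qed
  also have "\<dots> = integral\<^sup>L M (\<lambda>\<omega>. \<Sum>k\<le>N. indicator (A k) \<omega> * Mt t \<omega>)"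
    by (rule Bochner_Integration.integral_sum[symmetric]) (rule intA', auto)
  also have "\<dots> \<le> integral\<^sup>L M (\<lambda>\<omega>. \<phi> (X t \<omega>) + Z \<omega>)"
    by (rule integral_mono[OF i3 i4 iv])
  also have "\<dots> = integral\<^sup>L M (\<lambda>\<omega>. \<phi> (X t \<omega>)) + integral\<^sup>L M Z"
    by (rule Bochner_Integration.integral_add[OF pint Zint])
  finally have ch: "c * measure M Gs - integral\<^sup>L M Z \<le> integral\<^sup>L M (\<lambda>\<omega>. \<phi> (X t \<omega>)) + integral\<^sup>L M Z" .
  have "integral\<^sup>L M (\<lambda>\<omega>. \<phi> (X t \<omega>)) = integral\<^sup>L M (\<lambda>\<omega>. \<phi> (X t \<omega>) - Mt t \<omega>)"
    using Bochner_Integration.integral_diff[OF pint mint] E_Mt[of t] t by simp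
  also have "\<dots> \<le> integral\<^sup>L M Z"
    by (rule integral_mono[OF i5 Zint v])
  finally have "integral\<^sup>L M (\<lambda>\<omega>. \<phi> (X t \<omega>)) \<le> integral\<^sup>L M Z" .
  with ch have "c * measure M Gs \<le> 3 * integral\<^sup>L M Z" by linarith
  then have "measure M Gs * c \<le> 3 * K * t * measure M (Ft t)" unfolding EZ by (simp add: algebra_simps)
  then have "measure M Gs \<le> 3 * K * t * measure M (Ft t) / c" using c by (simp add: pos_le_divide_eq)
  then show ?thesis by (simp add: Gs_def)
qed

end

context est
begin

lemma grid_sets:
  fixes \<tau> :: "nat \<Rightarrow> real" and N :: nat
  assumes "\<And>k. k \<le> N \<Longrightarrow> 0 \<le> \<tau> k"
  shows "{\<omega>\<in>space M. \<exists>k\<le>N. c \<le> \<phi> (X (\<tau> k) \<omega>)} \<in> sets M"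
proof -
  have bc: "{y. c \<le> \<phi> y} \<in> sets borel"
    by (intro borel_closed closed_Collect_le phic continuous_intros)
  have "{\<omega>\<in>space M. \<exists>k\<le>N. c \<le> \<phi> (X (\<tau> k) \<omega>)} = (\<Union>k\<in>{..N}. X (\<tau> k) -` {y. c \<le> \<phi> y} \<inter> space M)"
    by blast
  moreover have "(\<Union>k\<in>{..N}. X (\<tau> k) -` {y. c \<le> \<phi> y} \<inter> space M) \<in> sets M"
    apply (rule sets.countable_UN'[OF countable_finite[OF finite_atMost]])
    apply (rule image_subsetI)
    apply (rule pre_sets[OF _ bc])
    using assms apply auto
    done
  ultimately show ?thesis by simp
qed

lemma floor_grid:
  fixes s t :: real and n :: nat
  assumes t: "t > 0" and s: "0 \<le> s" "s \<le> t"
  defines "k \<equiv> nat \<lfloor>s * 2^n / t\<rfloor>"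
  shows "k \<le> 2^n" "real k * t / 2^n \<le> s" "s - real k * t / 2^n < t / 2^n"
proof -
  have q0: "0 \<le> s * 2^n / t" using s t by simp
  have q1: "s * 2^n / t \<le> 2^n" using s t by (simp add: divide_le_eq)
  have rk: "real k = of_int \<lfloor>s * 2^n / t\<rfloor>" using q0 by (simp add: k_def)
  have f1: "real k \<le> s * 2^n / t" using rk by simp
  have f2: "s * 2^n / t < real k + 1" using rk by linarith
  have "real k \<le> 2^n" using f1 q1 by linarith
  then show "k \<le> 2^n" by (metis of_nat_le_iff of_nat_numeral of_nat_power)
  have p: "(2::real)^n > 0" by simp
  from f1 show "real k * t / 2^n \<le> s" using t p by (simp add: field_simps)
  from f2 have "s * 2^n < (real k + 1) * t" using t by (simp add: field_simps)
  then have "s * 2^n - real k * t < t" by (simp add: algebra_simps)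
  then have "(s * 2^n - real k * t) / 2^n < t / 2^n" using p by (rule divide_strict_right_mono)
  moreover have "s - real k * t / 2^n = (s * 2^n - real k * t) / 2^n" using p by (simp add: field_simps)
  ultimately show "s - real k * t / 2^n < t / 2^n" by simp
qed

lemma hit_bound:
  assumes t: "t > 0"
  shows "measure M {\<omega>\<in>space M. \<exists>s\<in>{0..t}. c < \<phi> (X s \<omega>)} \<le> 3 * K * t * measure M (Ft t) / c"
proof -
  interpret prob_space M by (rule P)
  define \<tau> where "\<tau> n k = real k * t / 2^n" for n k :: nat
  define Gn where "Gn n = {\<omega>\<in>space M. \<exists>k\<le>2^n. c \<le> \<phi> (X (\<tau> n k) \<omega>)}" for n
  have \<tau>: "0 \<le> \<tau> n k \<and> \<tau> n k \<le> t" if "k \<le> 2^n" for n k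
  proof -
    have "real k \<le> 2^n" using that by (metis of_nat_le_iff of_nat_numeral of_nat_power)
    then show ?thesis using t by (simp add: \<tau>_def field_simps)
  qed
  have \<tau>m: "\<tau> n j \<le> \<tau> n k" if "j \<le> k" for n j k
    using that t by (simp add: \<tau>_def divide_right_mono mult_right_mono)
  have Gb: "measure M (Gn n) \<le> 3 * K * t * measure M (Ft t) / c" for n
    unfolding Gn_def by (rule grid_bound[OF t]) (use \<tau> \<tau>m in auto)
  have Gs: "Gn n \<in> sets M" for n
    unfolding Gn_def by (rule grid_sets) (use \<tau> in auto)
  have inc: "incseq Gn"
  proof (rule incseq_SucI, rule subsetI)
    fix n \<omega> assume "\<omega> \<in> Gn n"
    then obtain k where k: "\<omega> \<in> space M" "k \<le> 2^n" "c \<le> \<phi> (X (\<tau> n k) \<omega>)" by (auto simp: Gn_def)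
    have "\<tau> (Suc n) (2*k) = \<tau> n k" by (simp add: \<tau>_def)
    moreover have "2*k \<le> 2^Suc n" using k(2) by simp
    ultimately show "\<omega> \<in> Gn (Suc n)" using k unfolding Gn_def by (metis (mono_tags, lifting) mem_Collect_eq)
  qed
  have sub: "{\<omega>\<in>space M. \<exists>s\<in>{0..t}. c < \<phi> (X s \<omega>)} \<subseteq> (\<Union>n. Gn n)"
  proof
    fix \<omega> assume "\<omega> \<in> {\<omega>\<in>space M. \<exists>s\<in>{0..t}. c < \<phi> (X s \<omega>)}"
    then obtain s where \<omega>: "\<omega> \<in> space M" and s: "s \<in> {0..t}" "c < \<phi> (X s \<omega>)" by auto
    have cont: "continuous_on {0..t} (\<lambda>u. \<phi> (X u \<omega>))"
      by (rule continuous_on_compose2[OF phic Xc_t[OF \<omega>]]) auto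
    obtain d where d: "d > 0" "\<forall>u\<in>{0..t}. dist u s < d \<longrightarrow> dist (\<phi> (X u \<omega>)) (\<phi> (X s \<omega>)) < \<phi> (X s \<omega>) - c"
      using cont s unfolding continuous_on_iff by (meson diff_gt_0_iff_gt)
    obtain n where n: "t / d < 2^n" using real_arch_pow[of 2 "t / d"] by auto
    then have nd: "t / 2^n < d" using d t by (simp add: field_simps)
    define k where "k = nat \<lfloor>s * 2^n / t\<rfloor>"
    have kk: "k \<le> 2^n" "real k * t / 2^n \<le> s" "s - real k * t / 2^n < t / 2^n"
      using floor_grid[OF t, of s n] s unfolding k_def by auto
    have "\<tau> n k \<in> {0..t}" using \<tau>[OF kk(1)] by simp
    moreover have "dist (\<tau> n k) s < d" using kk nd by (simp add: \<tau>_def dist_real_def)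
    ultimately have "dist (\<phi> (X (\<tau> n k) \<omega>)) (\<phi> (X s \<omega>)) < \<phi> (X s \<omega>) - c" using d by blast
    then have "c \<le> \<phi> (X (\<tau> n k) \<omega>)" by (simp add: dist_real_def)
    then have "\<omega> \<in> Gn n" using \<omega> kk(1) unfolding Gn_def by blast
    then show "\<omega> \<in> (\<Union>n. Gn n)" by blast
  qed
  have "measure M {\<omega>\<in>space M. \<exists>s\<in>{0..t}. c < \<phi> (X s \<omega>)} \<le> measure M (\<Union>n. Gn n)"
    by (rule finite_measure_mono[OF sub]) (use Gs in auto)
  also have "\<dots> \<le> 3 * K * t * measure M (Ft t) / c"
    by (rule LIMSEQ_le_const2[OF finite_Lim_measure_incseq]) (use Gs inc Gb in auto)
  finally show ?thesis .
qed

end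

context est
begin

lemma Ft_mono: "s \<le> t \<Longrightarrow> Ft s \<subseteq> Ft t"
  unfolding Ft_def by auto

lemma Ft_lim:
  assumes \<rho>: "\<rho> > 0"
  shows "((\<lambda>t. measure M (Ft t)) \<longlongrightarrow> 0) (at_right 0)"
proof -
  interpret prob_space M by (rule P)
  define B where "B n = Ft (inverse (real n))" for n :: nat
  have Bs: "range B \<subseteq> sets M" using Ft_sets by (auto simp: B_def)
  have dec: "decseq (\<lambda>n. B (Suc n))"
  proof (rule decseq_SucI)
    fix n show "B (Suc (Suc n)) \<subseteq> B (Suc n)" unfolding B_def
      by (rule Ft_mono) (simp add: field_simps)
  qed
  have empty: "(\<Inter>n. B (Suc n)) = {}"
  proof (rule ccontr)
    assume "(\<Inter>n. B (Suc n)) \<noteq> {}"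
    then obtain \<omega> where \<omega>: "\<forall>n. \<omega> \<in> B (Suc n)" by blast
    then have \<omega>s: "\<omega> \<in> space M" by (auto simp: B_def Ft_def)
    obtain d where d: "d > 0" "\<forall>u\<in>{0..}. dist u 0 < d \<longrightarrow> dist (X u \<omega>) (X 0 \<omega>) < \<rho>"
      using Xc'[OF \<omega>s] \<rho> unfolding continuous_on_iff by (meson atLeast_iff order_refl)
    obtain n where n: "n > 0" "inverse (real n) < d" using ex_inverse_of_nat_less[OF d(1)] by auto
    obtain m where m: "n = Suc m" using n(1) gr0_implies_Suc by blast
    from \<omega>[rule_format, of m] obtain s where s: "s \<in> {0..inverse (real n)}" "dist (X s \<omega>) x > \<rho>"
      by (auto simp: B_def Ft_def m)
    have "dist s 0 < d" using s n by (auto simp: dist_real_def)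
    then have "dist (X s \<omega>) x < \<rho>" using d s X0[OF \<omega>s] by auto
    then show False using s by simp
  qed
  have lim: "(\<lambda>n. measure M (B (Suc n))) \<longlonglongrightarrow> 0"
    using finite_Lim_measure_decseq[of "\<lambda>n. B (Suc n)"] Bs dec empty by auto
  show ?thesis
    unfolding tendsto_iff
  proof (intro allI impI)
    fix \<epsilon> :: real assume \<epsilon>: "\<epsilon> > 0"
    obtain n where n: "measure M (B (Suc n)) < \<epsilon>"
      using lim \<epsilon> unfolding LIMSEQ_iff by fastforce
    show "\<forall>\<^sub>F t in at_right 0. dist (measure M (Ft t)) 0 < \<epsilon>"
      unfolding eventually_at_right_field
    proof (intro exI[of _ "inverse (real (Suc n))"] conjI allI impI)
      fix t :: real assume t: "0 < t" "t < inverse (real (Suc n))"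
      have "measure M (Ft t) \<le> measure M (B (Suc n))"
        unfolding B_def by (rule finite_measure_mono[OF Ft_mono]) (use t Ft_sets in auto)
      then show "dist (measure M (Ft t)) 0 < \<epsilon>" using n by (simp add: dist_real_def)
    qed simp
  qed
qed

end

context est
begin

lemma diff_lim:
  fixes C :: "(real^'n) set" and \<beta> :: "real^'n \<Rightarrow> real"
  assumes r: "r > 0" and rC: "cball x r \<subseteq> C" and Cc: "closed C" and \<rho>: "\<rho> > 0"
    and phir: "\<And>y. dist y x = r \<Longrightarrow> c < \<phi> y"
    and \<beta>m: "\<beta> \<in> borel_measurable borel" and \<beta>b: "\<And>y. \<bar>\<beta> y\<bar> \<le> Bb"
  shows "((\<lambda>t. ((LINT \<omega>|M. \<beta> (X t \<omega>)) - killed_sg M X C \<beta> t) / t) \<longlongrightarrow> 0) (at_right 0)"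
proof -
  interpret prob_space M by (rule P)
  define Ex where "Ex t = {\<omega>\<in>space M. \<exists>s\<in>{0..t}. X s \<omega> \<in> - C}" for t
  have Bb0: "0 \<le> Bb" using \<beta>b[of x] by linarith
  have Exs: "Ex t \<in> sets M" if "t \<ge> 0" for t
    unfolding Ex_def by (rule exists_open_sets) (use Cc that in auto)
  have ExHit: "Ex t \<subseteq> {\<omega>\<in>space M. \<exists>s\<in>{0..t}. c < \<phi> (X s \<omega>)}" for t
  proof
    fix \<omega> assume "\<omega> \<in> Ex t"
    then obtain s where \<omega>: "\<omega> \<in> space M" and s: "s \<in> {0..t}" "X s \<omega> \<notin> C" by (auto simp: Ex_def)
    have "X s \<omega> \<notin> cball x r" using s rC by blast
    then have rs: "r \<le> dist (X s \<omega>) x" by (simp add: dist_commute)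
    have cont: "continuous_on {0..s} (\<lambda>u. dist (X u \<omega>) x)"
      by (intro continuous_intros Xc_t[OF \<omega>])
    have "dist (X 0 \<omega>) x \<le> r" using X0[OF \<omega>] r by simp
    then obtain s' where s': "0 \<le> s'" "s' \<le> s" "dist (X s' \<omega>) x = r"
      using IVT'[of "\<lambda>u. dist (X u \<omega>) x" 0 r s, OF _ rs _ cont] s by auto
    have "c < \<phi> (X s' \<omega>)" by (rule phir[OF s'(3)])
    then show "\<omega> \<in> {\<omega>\<in>space M. \<exists>s\<in>{0..t}. c < \<phi> (X s \<omega>)}" using \<omega> s s' by auto
  qed
  have Hits: "{\<omega>\<in>space M. \<exists>s\<in>{0..t}. c < \<phi> (X s \<omega>)} \<in> sets M" if "t \<ge> 0" for t
  proof -
    have o: "open {y. c < \<phi> y}" by (intro open_Collect_less phic continuous_intros)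
    show ?thesis using exists_open_sets[OF o that] by simp
  qed
  have PEx: "measure M (Ex t) \<le> 3 * K * t * measure M (Ft t) / c" if "t > 0" for t
  proof -
    have "measure M (Ex t) \<le> measure M {\<omega>\<in>space M. \<exists>s\<in>{0..t}. c < \<phi> (X s \<omega>)}"
      by (rule finite_measure_mono[OF ExHit Hits]) (use that in simp)
    also have "\<dots> \<le> 3 * K * t * measure M (Ft t) / c" by (rule hit_bound[OF that])
    finally show ?thesis .
  qed
  have \<beta>X: "(\<lambda>\<omega>. \<beta> (X t \<omega>)) \<in> borel_measurable M" if "t \<ge> 0" for t
    by (rule measurable_compose[OF Xm'[OF that] \<beta>m])
  have \<beta>int: "integrable M (\<lambda>\<omega>. \<beta> (X t \<omega>))" if "t \<ge> 0" for t
    by (rule integrable_const_bound[where B=Bb]) (use \<beta>b \<beta>X[OF that] in auto)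
  have indint: "integrable M (\<lambda>\<omega>. indicator (Ex t) \<omega> * \<beta> (X t \<omega>))" if "t \<ge> 0" for t
    using integrable_real_mult_indicator[OF Exs[OF that] \<beta>int[OF that]] by (simp add: mult.commute)
  have killed: "killed_sg M X C \<beta> t = (LINT \<omega>|M. \<beta> (X t \<omega>)) - (LINT \<omega>|M. indicator (Ex t) \<omega> * \<beta> (X t \<omega>))"
    if "t \<ge> 0" for t
  proof -
    have "killed_sg M X C \<beta> t = (LINT \<omega>|M. \<beta> (X t \<omega>) - indicator (Ex t) \<omega> * \<beta> (X t \<omega>))"
      unfolding killed_sg_def by (rule Bochner_Integration.integral_cong) (auto simp: Ex_def indicator_def)
    also have "\<dots> = (LINT \<omega>|M. \<beta> (X t \<omega>)) - (LINT \<omega>|M. indicator (Ex t) \<omega> * \<beta> (X t \<omega>))"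
      by (rule Bochner_Integration.integral_diff[OF \<beta>int[OF that] indint[OF that]])
    finally show ?thesis .
  qed
  have bnd: "\<bar>((LINT \<omega>|M. \<beta> (X t \<omega>)) - killed_sg M X C \<beta> t) / t\<bar> \<le> Bb * 3 * K / c * measure M (Ft t)"
    if t: "t > 0" for t
  proof -
    have fi: "integrable M (\<lambda>\<omega>. indicator (Ex t) \<omega> * \<beta> (X t \<omega>))" using indint t by simp
    have gi: "integrable M (\<lambda>\<omega>. Bb * indicator (Ex t) \<omega>)"
      using Exs[of t] t by (auto simp: less_top[symmetric])
    have "norm (LINT \<omega>|M. indicator (Ex t) \<omega> * \<beta> (X t \<omega>)) \<le> (LINT \<omega>|M. norm (indicator (Ex t) \<omega> * \<beta> (X t \<omega>)))"
      by (rule integral_norm_bound)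
    also have "\<dots> \<le> (LINT \<omega>|M. Bb * indicator (Ex t) \<omega>)"
    proof (rule integral_mono)
      show "integrable M (\<lambda>\<omega>. norm (indicator (Ex t) \<omega> * \<beta> (X t \<omega>)))" using fi by (rule integrable_norm)
      show "integrable M (\<lambda>\<omega>. Bb * indicator (Ex t) \<omega>)" by (rule gi)
      fix \<omega> show "norm (indicator (Ex t) \<omega> * \<beta> (X t \<omega>)) \<le> Bb * indicator (Ex t) \<omega>"
        using \<beta>b[of "X t \<omega>"] by (auto simp: indicator_def)
    qed
    finally have "norm (LINT \<omega>|M. indicator (Ex t) \<omega> * \<beta> (X t \<omega>)) \<le> (LINT \<omega>|M. Bb * indicator (Ex t) \<omega>)" .
    then have "\<bar>LINT \<omega>|M. indicator (Ex t) \<omega> * \<beta> (X t \<omega>)\<bar> \<le> (LINT \<omega>|M. Bb * indicator (Ex t) \<omega>)" by simp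
    also have "\<dots> = Bb * measure M (Ex t)"
    proof -
      have "Ex t \<inter> space M = Ex t" by (auto simp: Ex_def)
      then show ?thesis by simp
    qed
    also have "\<dots> \<le> Bb * (3 * K * t * measure M (Ft t) / c)"
      by (rule mult_left_mono[OF PEx[OF t] Bb0])
    finally have "\<bar>(LINT \<omega>|M. \<beta> (X t \<omega>)) - killed_sg M X C \<beta> t\<bar> \<le> Bb * (3 * K * t * measure M (Ft t) / c)"
      using killed[of t] t by simp
    then show ?thesis using t by (simp add: abs_div pos_divide_le_eq field_simps)
  qed
  show ?thesis
  proof (rule Lim_null_comparison)
    show "\<forall>\<^sub>F t in at_right 0. norm (((LINT \<omega>|M. \<beta> (X t \<omega>)) - killed_sg M X C \<beta> t) / t) \<le> Bb * 3 * K / c * measure M (Ft t)"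
      using eventually_at_right_less[of "0::real"] by eventually_elim (use bnd in auto)
    show "((\<lambda>t. Bb * 3 * K / c * measure M (Ft t)) \<longlongrightarrow> 0) (at_right 0)"
      using tendsto_mult[OF tendsto_const Ft_lim[OF \<rho>], of "Bb * 3 * K / c"] by simp
  qed
qed

end

theorem theorem5:
  fixes f :: "(real^'n) \<times> (real^'m) \<Rightarrow> real^'n"
    and \<sigma> :: "(real^'n) \<times> (real^'m) \<Rightarrow> real^'w^'n"
    and \<pi> :: "real^'n \<Rightarrow> real^'m"
    and U :: "(real^'m) set"
    and C :: "(real^'n) set"
    and M :: "'a measure"
    and X :: "real \<Rightarrow> 'a \<Rightarrow> real^'n"
    and \<beta> :: "real^'n \<Rightarrow> real"
    and x :: "real^'n"
  assumes f_lip: "loc_lipschitz f"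
    and \<sigma>_lip: "loc_lipschitz \<sigma>"
    and \<pi>_lip: "\<exists>L. L-lipschitz_on UNIV \<pi>"
    and \<pi>_U: "\<forall>y. \<pi> y \<in> U"
    and C_compact: "compact C"
    and C_proper: "C \<noteq> UNIV"
    and C_regular: "closure (interior C) = C"
    and C_int_ne: "interior C \<noteq> {}"
    and C_int_conn: "connected (interior C)"
    and \<sigma>_rank: "\<forall>y\<in>C. \<forall>u\<in>U. rank (\<sigma> (y, u)) = CARD('n)"
    and sol: "cl_solution M X f \<sigma> \<pi> x"
    and x_int: "x \<in> interior C"
    and \<beta>_meas: "\<beta> \<in> borel_measurable borel"
    and \<beta>_bdd: "bounded (range \<beta>)"
    and \<beta>_zero: "\<forall>y. y \<notin> C \<longrightarrow> \<beta> y = 0"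
  shows "((\<exists>a. ((\<lambda>t. (killed_sg M X C \<beta> t - \<beta> x) / t) \<longlongrightarrow> a) (at_right 0)) \<longleftrightarrow>
          (\<exists>a. ((\<lambda>\<tau>. ((LINT \<omega>|M. \<beta> (X \<tau> \<omega>)) - \<beta> x) / \<tau>) \<longlongrightarrow> a) (at_right 0)))
       \<and> (\<forall>a b. ((\<lambda>t. (killed_sg M X C \<beta> t - \<beta> x) / t) \<longlongrightarrow> a) (at_right 0) \<longrightarrow>
                ((\<lambda>\<tau>. ((LINT \<omega>|M. \<beta> (X \<tau> \<omega>)) - \<beta> x) / \<tau>) \<longlongrightarrow> b) (at_right 0) \<longrightarrow>
                a = b)"
proof -
  have P: "prob_space M" and Xm: "\<forall>t\<ge>0. X t \<in> borel_measurable M"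
    and Xc: "\<forall>\<omega>\<in>space M. X 0 \<omega> = x \<and> continuous_on {0..} (\<lambda>t. X t \<omega>)"
    and solm: "\<forall>\<phi> D H. test_fun \<phi> D H \<longrightarrow>
        (let Mt = (\<lambda>t \<omega>. \<phi> (X t \<omega>) - \<phi> (X 0 \<omega>)
                      - integral {0..t} (\<lambda>s. cl_generator f \<sigma> \<pi> D H (X s \<omega>)))
         in \<forall>s t. 0 \<le> s \<longrightarrow> s \<le> t \<longrightarrow>
              integrable M (Mt t) \<and>
              (\<forall>A\<in>nat_filt M X s. (LINT \<omega>:A|M. Mt t \<omega>) = (LINT \<omega>:A|M. Mt s \<omega>)))"
    using sol unfolding cl_solution_def by blast+
  obtain r where r: "r > 0" "cball x r \<subseteq> C" using x_int mem_interior_cball by blast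
  define m where "m = r^2"
  define w where "w = r^2/2"
  define \<phi> where "\<phi> = phif x m w"
  define D where "D = Df x m w"
  define H where "H = Hf x m w"
  define G where "G = cl_generator f \<sigma> \<pi> D H"
  define Mt where "Mt = (\<lambda>t \<omega>. \<phi> (X t \<omega>) - \<phi> (X 0 \<omega>) - integral {0..t} (\<lambda>s. G (X s \<omega>)))"
  define c where "c = w^6 / 2"
  have tf: "test_fun \<phi> D H" unfolding \<phi>_def D_def H_def m_def w_def by (rule test_fun_phif[OF r(1)])
  have mart: "\<forall>s t. 0 \<le> s \<longrightarrow> s \<le> t \<longrightarrow> integrable M (Mt t) \<and>
       (\<forall>A\<in>nat_filt M X s. (LINT \<omega>:A|M. Mt t \<omega>) = (LINT \<omega>:A|M. Mt s \<omega>))"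
    using solm[rule_format, OF tf] unfolding Let_def Mt_def G_def .
  have fc: "continuous_on UNIV f" by (rule loc_lipschitz_cont[OF f_lip])
  have sc: "continuous_on UNIV \<sigma>" by (rule loc_lipschitz_cont[OF \<sigma>_lip])
  have pc: "continuous_on UNIV \<pi>" using \<pi>_lip lipschitz_on_continuous_on by blast
  have Dc: "continuous_on UNIV D" unfolding D_def Df_def[abs_def] betaf_def
    by (intro continuous_intros)
  have Hc: "continuous_on UNIV H" unfolding H_def by (rule continuous_Hf)
  have Gc: "continuous_on UNIV G" unfolding G_def by (rule cl_generator_cont[OF fc sc pc Dc Hc])
  have pf_out: "pf x m w y \<le> 0" if "y \<notin> cball x (2*r)" for y
  proof (rule ccontr)
    assume "\<not> pf x m w y \<le> 0"
    then have "pf x (r^2) (r^2/2) y > 0" unfolding m_def w_def by simp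
    then show False using pf_pos_dist[OF r(1), of x y] that by (auto simp: dist_commute)
  qed
  have pf_in: "pf x m w y \<le> 0" if "dist y x \<le> r/2" for y
  proof (rule ccontr)
    assume "\<not> pf x m w y \<le> 0"
    then have "pf x (r^2) (r^2/2) y > 0" unfolding m_def w_def by simp
    then show False using pf_pos_dist[OF r(1), of x y] that by auto
  qed
  obtain K where K: "K \<ge> 0" "\<forall>y. \<bar>G y\<bar> \<le> K"
    using bound_outside[OF Gc compact_cball, of x "2*r"] pf_out unfolding G_def D_def H_def
    by (auto intro: gen_zero_if)
  have Gz: "G y = 0" if "dist y x \<le> r/2" for y
    unfolding G_def D_def H_def by (rule gen_zero_if[OF pf_in[OF that]])
  have phic: "continuous_on UNIV \<phi>" unfolding \<phi>_def by (rule continuous_phif)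
  obtain Bp where Bp: "Bp \<ge> 0" "\<forall>y. \<bar>\<phi> y\<bar> \<le> Bp"
    using bound_outside[OF phic compact_cball, of x "2*r"] pf_out unfolding \<phi>_def
    by (auto intro: phif_zero_if)
  have c: "c > 0" using r by (simp add: c_def w_def)
  have phi0: "\<And>y. 0 \<le> \<phi> y" unfolding \<phi>_def by (rule phif_nonneg)
  have phix: "\<phi> x = 0" unfolding \<phi>_def m_def w_def by (rule phif_center[OF r(1)])
  have phib: "\<And>y. \<phi> y \<le> Bp" using Bp by (auto simp: abs_le_iff)
  have GK: "\<And>y. \<bar>G y\<bar> \<le> K" using K by auto
  have Mteq: "\<And>t \<omega>. Mt t \<omega> = \<phi> (X t \<omega>) - \<phi> (X 0 \<omega>) - integral {0..t} (\<lambda>s. G (X s \<omega>))"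
    by (simp add: Mt_def)
  interpret E: est M X x \<phi> G K "r/2" c Bp Mt
    by (rule est.intro[OF paths.intro[OF P Xm Xc] est_axioms.intro[OF phic phi0 phix phib GK Gz mart Mteq c]])
  have phir: "c < \<phi> y" if "dist y x = r" for y
  proof -
    have "\<phi> y = w^6" unfolding \<phi>_def m_def w_def by (rule phif_sphere[OF that])
    then show ?thesis using c by (simp add: c_def)
  qed
  obtain Bb where Bb: "\<forall>y. \<bar>\<beta> y\<bar> \<le> Bb"
    using \<beta>_bdd unfolding bounded_iff by auto
  have gl: "((\<lambda>t. ((LINT \<omega>|M. \<beta> (X t \<omega>)) - killed_sg M X C \<beta> t) / t) \<longlongrightarrow> 0) (at_right 0)"
    using r Bb by (intro E.diff_lim[OF r(1) r(2) compact_imp_closed[OF C_compact] _ phir \<beta>_meas]) auto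
  define Q where "Q t = (killed_sg M X C \<beta> t - \<beta> x) / t" for t
  define R where "R t = ((LINT \<omega>|M. \<beta> (X t \<omega>)) - \<beta> x) / t" for t
  define g where "g t = ((LINT \<omega>|M. \<beta> (X t \<omega>)) - killed_sg M X C \<beta> t) / t" for t
  have QR: "Q t = R t - g t" for t unfolding Q_def R_def g_def by (simp add: diff_divide_distrib)
  have g0: "(g \<longlongrightarrow> 0) (at_right 0)" using gl unfolding g_def .
  have QRl: "(Q \<longlongrightarrow> a) (at_right 0) \<longleftrightarrow> (R \<longlongrightarrow> a) (at_right 0)" for a
  proof
    assume "(Q \<longlongrightarrow> a) (at_right 0)"
    from tendsto_add[OF this g0] show "(R \<longlongrightarrow> a) (at_right 0)" by (simp add: QR)
  next
    assume "(R \<longlongrightarrow> a) (at_right 0)"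
    from tendsto_diff[OF this g0] show "(Q \<longlongrightarrow> a) (at_right 0)" by (simp add: QR[abs_def])
  qed
  show ?thesis
  proof (intro conjI allI impI)
    show "(\<exists>a. ((\<lambda>t. (killed_sg M X C \<beta> t - \<beta> x) / t) \<longlongrightarrow> a) (at_right 0)) \<longleftrightarrow>
          (\<exists>a. ((\<lambda>\<tau>. ((LINT \<omega>|M. \<beta> (X \<tau> \<omega>)) - \<beta> x) / \<tau>) \<longlongrightarrow> a) (at_right 0))"
      using QRl unfolding Q_def[abs_def] R_def[abs_def] by blast
  next
    fix a b
    assume a: "((\<lambda>t. (killed_sg M X C \<beta> t - \<beta> x) / t) \<longlongrightarrow> a) (at_right 0)"
      and b: "((\<lambda>\<tau>. ((LINT \<omega>|M. \<beta> (X \<tau> \<omega>)) - \<beta> x) / \<tau>) \<longlongrightarrow> b) (at_right 0)"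
    have "(R \<longlongrightarrow> a) (at_right 0)" using a QRl unfolding Q_def[abs_def] R_def[abs_def] by blast
    moreover have "(R \<longlongrightarrow> b) (at_right 0)" using b unfolding R_def[abs_def] .
    ultimately show "a = b" by (rule tendsto_unique[rotated]) (simp add: trivial_limit_at_right_real)
  qed
qed

end
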